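(* There is a constant $\breve C_1>0$, independent of $N$ (depending only on $\Omega$), such that for all $f,g\in\mathcal C_{\rm per}$, $$\|\Delta_h(fg)\|_2\le\breve C_1\big(\|f\|_2+\|\Delta_hf\|_2\big)\big(\|g\|_2+\|\Delta_hg\|_2\big),$$ where $fg$ denotes the pointwise product.
   Context: Grid setting: $\Omega=(0,1)^3$, $N$ a positive integer, $h=1/N$. $\mathcal C_{\rm per}$ is the space of complex-valued grid functions on the points $(ih,jh,kh)$, $N$-periodic in each index. Discrete inner product $\langle f,g\rangle=h^3\sum_{i,j,k=1}^N\overline{f_{i,j,k}}\,g_{i,j,k}$, $\|f\|_2=\langle f,f\rangle^{1/2}$. Forward differences $D_xf_{i+1/2,j,k}=(f_{i+1,j,k}-f_{i,j,k})/h$ (similarly $D_y,D_z$), and $\Delta_h=D_x^2+D_y^2+D_z^2$ is the standard 7-point discrete Laplacian, $(\Delta_hf)_{i,j,k}=h^{-2}(f_{i+1,j,k}+f_{i-1,j,k}+f_{i,j+1,k}+f_{i,j-1,k}+f_{i,j,k+1}+f_{i,j,k-1}-6f_{i,j,k})$. *)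

theory Defs
  imports "HOL-Analysis.Analysis"
begin

text \<open>Grid functions on the points (ih,jh,kh), indexed by integers (i,j,k),
  complex valued; membership in C_per is N-periodicity in each index.\<close>

type_synonym grid_fun = "int \<Rightarrow> int \<Rightarrow> int \<Rightarrow> complex"

definition grid_h :: "nat \<Rightarrow> real" where
  "grid_h N = 1 / real N"

definition per_grid :: "nat \<Rightarrow> grid_fun \<Rightarrow> bool" where
  "per_grid N f \<longleftrightarrow> (\<forall>i j k.
      f (i + int N) j k = f i j k \<and> f i (j + int N) k = f i j k \<and> f i j (k + int N) = f i j k)"

definition grid_inner :: "nat \<Rightarrow> grid_fun \<Rightarrow> grid_fun \<Rightarrow> complex" where
  "grid_inner N f g = complex_of_real (grid_h N ^ 3) *
     (\<Sum>i\<in>{1..int N}. \<Sum>j\<in>{1..int N}. \<Sum>k\<in>{1..int N}. cnj (f i j k) * g i j k)"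

definition grid_norm2 :: "nat \<Rightarrow> grid_fun \<Rightarrow> real" where
  "grid_norm2 N f = sqrt (Re (grid_inner N f f))"

definition lap_h :: "nat \<Rightarrow> grid_fun \<Rightarrow> grid_fun" where
  "lap_h N f = (\<lambda>i j k. complex_of_real (1 / grid_h N ^ 2) *
      (f (i+1) j k + f (i-1) j k + f i (j+1) k + f i (j-1) k + f i j (k+1) + f i j (k-1)
       - 6 * f i j k))"

end

theory Submission
  imports Defs
begin


definition ex :: "nat \<Rightarrow> int \<Rightarrow> int \<Rightarrow> complex" where
  "ex n j x = cis (2 * pi * of_int j * of_int x / real n)"

lemma ex_add1: "ex n j x * ex n l x = ex n (j + l) x"
  by (simp add: ex_def cis_mult add_divide_distrib algebra_simps)

lemma ex_add2: "ex n j x * ex n j y = ex n j (x + y)"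
  by (simp add: ex_def cis_mult add_divide_distrib algebra_simps)

lemma ex_sym: "ex n j x = ex n x j"
  by (simp add: ex_def mult_ac)

lemma ex_cnj: "cnj (ex n j x) = ex n (- j) x"
  by (simp add: ex_def cis_cnj)

lemma ex_norm[simp]: "norm (ex n j x) = 1"
  by (simp add: ex_def)

lemma ex_per: assumes "n \<ge> 1" shows "ex n (j + int n * q) x = ex n j x"
proof -
  have "2 * pi * of_int (j + int n * q) * of_int x / real n
      = 2 * pi * of_int j * of_int x / real n + 2 * pi * of_int (q * x)"
    using assms by (simp add: field_simps)
  then show ?thesis unfolding ex_def
    by (simp add: cis_mult[symmetric] )
qed

lemma ex_mod: assumes "n \<ge> 1" shows "ex n (j mod int n) x = ex n j x"
  using ex_per[OF assms, of "j mod int n" "j div int n" x]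
  by (metis mult_div_mod_eq add.commute)

lemma ex_dvd: assumes "n \<ge> 1" "int n dvd j" shows "ex n j x = 1"
proof -
  obtain q where "j = int n * q" using assms by (auto simp: dvd_def)
  then show ?thesis using ex_per[OF assms(1), of 0 q x] by (simp add: ex_def)
qed

lemma geo_sum:
  assumes n: "n \<ge> 1"
  shows "(\<Sum>x\<in>{a..a + int n - 1}. ex n j x) = (if int n dvd j then of_nat n else 0)"
proof (cases "int n dvd j")
  case True
  then show ?thesis using ex_dvd[OF n True] by simp
next
  case False
  define z where "z = cis (2 * pi * of_int j / real n)"
  have bij: "{a..a + int n - 1} = (\<lambda>t. a + int t) ` {..<n}"
  proof -
    have "x \<in> (\<lambda>t. a + int t) ` {..<n}" if "x \<in> {a..a + int n - 1}" for x
      using that by (intro image_eqI[of _ _ "nat (x - a)"]) auto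
    then show ?thesis by auto
  qed
  have inj: "inj_on (\<lambda>t. a + int t) {..<n}" by (auto simp: inj_on_def)
  have trm: "ex n j (a + int t) = ex n j a * z ^ t" for t
    unfolding ex_def z_def Complex.DeMoivre unfolding cis_mult
    by (rule arg_cong[where f=cis]) (simp add: add_divide_distrib algebra_simps)
  have zn: "z ^ n = 1"
    using n by (simp add: z_def Complex.DeMoivre)
  have z1: "z \<noteq> 1"
  proof
    assume "z = 1"
    then have "cos (2 * pi * of_int j / real n) = 1" unfolding z_def
      by (metis cis.sel(1) one_complex.sel(1))
    then obtain m :: int where m: "2 * pi * of_int j / real n = of_int m * 2 * pi"
      by (auto simp: cos_one_2pi_int)
    then have "of_int j = real n * of_int m" using n by (simp add: field_simps)
    then have "j = int n * m" by (metis of_int_eq_iff of_int_mult of_int_of_nat_eq)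
    then show False using False by auto
  qed
  have "(\<Sum>x\<in>{a..a + int n - 1}. ex n j x) = (\<Sum>t<n. ex n j (a + int t))"
    unfolding bij by (simp add: sum.reindex[OF inj])
  also have "\<dots> = ex n j a * (\<Sum>t<n. z ^ t)" by (simp add: trm sum_distrib_left)
  also have "\<dots> = 0" using z1 zn by (simp add: sum_gp_strict)
  finally show ?thesis using False by simp
qed

fun E :: "nat \<Rightarrow> int \<times> int \<times> int \<Rightarrow> int \<times> int \<times> int \<Rightarrow> complex" where
  "E n (k1, k2, k3) (x1, x2, x3) = ex n k1 x1 * ex n k2 x2 * ex n k3 x3"

lemma sum3_nest: "(\<Sum>i\<in>A. \<Sum>j\<in>B. \<Sum>k\<in>C. g i j k) = (\<Sum>(i, j, k)\<in>A \<times> B \<times> C. g i j k)"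
  by (simp add: sum.cartesian_product)

lemma sum3_prod:
  "(\<Sum>(i, j, k)\<in>A \<times> B \<times> C. (f i * g j * h k :: 'a::comm_semiring_0)) = sum f A * sum g B * sum h C"
proof -
  have "(\<Sum>(i, j, k)\<in>A \<times> B \<times> C. f i * g j * h k) = (\<Sum>i\<in>A. \<Sum>j\<in>B. \<Sum>k\<in>C. f i * g j * h k)"
    by (simp add: sum3_nest)
  also have "\<dots> = (\<Sum>i\<in>A. f i * (\<Sum>j\<in>B. g j * (\<Sum>k\<in>C. h k)))"
    by (simp add: sum_distrib_left mult.assoc)
  also have "\<dots> = (\<Sum>i\<in>A. f i * (sum g B * sum h C))"
    by (simp add: sum_distrib_right)
  also have "\<dots> = sum f A * sum g B * sum h C"
    by (simp add: sum_distrib_right mult.assoc)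
  finally show ?thesis .
qed

lemma E_sym: "E n k x = E n x k"
  by (cases k; cases x) (simp add: ex_sym)

lemma E_cnj_mult: "cnj (E n k x) * E n l x = E n (fst l - fst k, fst (snd l) - fst (snd k), snd (snd l) - snd (snd k)) x"
proof -
  have d: "ex n (l - k) y = ex n l y * ex n (- k) y" for l k y
    by (simp add: ex_add1)
  show ?thesis by (cases k; cases x; cases l) (simp add: ex_cnj d mult_ac)
qed

lemma E_norm[simp]: "norm (E n k x) = 1"
  by (cases k; cases x) (simp add: norm_mult)

lemma E_sum_x: "(\<Sum>x\<in>A \<times> B \<times> C. E n (d1, d2, d3) x) = sum (ex n d1) A * sum (ex n d2) B * sum (ex n d3) C"
  by (subst sum3_prod[symmetric]) (auto intro!: sum.cong)

lemma geo_I: "n \<ge> 1 \<Longrightarrow> (\<Sum>x\<in>{1..int n}. ex n j x) = (if int n dvd j then of_nat n else 0)"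
  using geo_sum[of n, where a=1 and j=j] by simp

lemma geo_K: "n \<ge> 1 \<Longrightarrow> (\<Sum>x\<in>{0..int n - 1}. ex n j x) = (if int n dvd j then of_nat n else 0)"
  using geo_sum[of n, where a=0 and j=j] by simp

lemma dvd_K: assumes "k \<in> {0..int n - 1}" "l \<in> {0..int n - 1}"
  shows "int n dvd (l - k) \<longleftrightarrow> l = k"
proof
  assume "int n dvd (l - k)"
  then have "l mod int n = k mod int n" by (simp add: mod_eq_dvd_iff)
  moreover have "l mod int n = l" "k mod int n = k" using assms by auto
  ultimately show "l = k" by simp
qed simp

abbreviation I3 :: "nat \<Rightarrow> (int \<times> int \<times> int) set" where
  "I3 n \<equiv> {1..int n} \<times> {1..int n} \<times> {1..int n}"
abbreviation K3 :: "nat \<Rightarrow> (int \<times> int \<times> int) set" where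
  "K3 n \<equiv> {0..int n - 1} \<times> {0..int n - 1} \<times> {0..int n - 1}"

lemma ortho_x:
  assumes n: "n \<ge> 1" and k: "k \<in> K3 n" and l: "l \<in> K3 n"
  shows "(\<Sum>x\<in>I3 n. cnj (E n k x) * E n l x) = (if k = l then of_nat n ^ 3 else 0)"
proof -
  obtain k1 k2 k3 where kk: "k = (k1, k2, k3)" by (cases k)
  obtain l1 l2 l3 where ll: "l = (l1, l2, l3)" by (cases l)
  have "(\<Sum>x\<in>I3 n. cnj (E n k x) * E n l x) = (\<Sum>x\<in>I3 n. E n (l1 - k1, l2 - k2, l3 - k3) x)"
    by (simp add: E_cnj_mult kk ll)
  also have "\<dots> = (if k = l then of_nat n ^ 3 else 0)"
    unfolding E_sum_x geo_I[OF n] using k l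
    by (auto simp: kk ll dvd_K power3_eq_cube)
  finally show ?thesis .
qed

lemma ortho_k:
  assumes n: "n \<ge> 1" and y: "y \<in> I3 n"
  shows "(\<Sum>k\<in>K3 n. cnj (E n k y) * E n k x) =
     (if int n dvd (fst x - fst y) \<and> int n dvd (fst (snd x) - fst (snd y)) \<and> int n dvd (snd (snd x) - snd (snd y))
      then of_nat n ^ 3 else 0)"
proof -
  have "(\<Sum>k\<in>K3 n. cnj (E n k y) * E n k x) = (\<Sum>k\<in>K3 n. E n (fst x - fst y, fst (snd x) - fst (snd y), snd (snd x) - snd (snd y)) k)"
    by (intro sum.cong refl) (metis E_sym E_cnj_mult)
  also have "\<dots> = (if int n dvd (fst x - fst y) \<and> int n dvd (fst (snd x) - fst (snd y)) \<and> int n dvd (snd (snd x) - snd (snd y))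
      then of_nat n ^ 3 else 0)"
    unfolding E_sum_x geo_K[OF n] by (auto simp: power3_eq_cube)
  finally show ?thesis .
qed

definition T :: "grid_fun \<Rightarrow> int \<times> int \<times> int \<Rightarrow> complex" where
  "T f = (\<lambda>(a, b, c). f a b c)"

lemma T_simp[simp]: "T f (a, b, c) = f a b c" by (simp add: T_def)

definition co :: "nat \<Rightarrow> grid_fun \<Rightarrow> int \<times> int \<times> int \<Rightarrow> complex" where
  "co n f k = (1 / of_nat n ^ 3) * (\<Sum>y\<in>I3 n. T f y * cnj (E n k y))"

lemma per1:
  assumes "\<And>i. \<phi> (i + int n) = \<phi> i"
  shows "\<phi> (i + int n * q) = \<phi> i"
proof -
  have "\<forall>i. \<phi> (i + int n * q) = \<phi> i"
  proof (induct q rule: int_induct[where k=0])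
    case base then show ?case by simp
  next
    case (step1 q)
    show ?case
    proof
      fix i
      have "\<phi> (i + int n * (q + 1)) = \<phi> ((i + int n) + int n * q)" by (simp add: algebra_simps)
      also have "\<dots> = \<phi> i" using step1(2) assms by simp
      finally show "\<phi> (i + int n * (q + 1)) = \<phi> i" .
    qed
  next
    case (step2 q)
    show ?case
    proof
      fix i
      have "\<phi> (i + int n * (q - 1)) = \<phi> ((i - int n) + int n * q)" by (simp add: algebra_simps)
      also have "\<dots> = \<phi> (i - int n)" using step2(2) by simp
      also have "\<dots> = \<phi> (i - int n + int n)" using assms[of "i - int n"] by simp
      finally show "\<phi> (i + int n * (q - 1)) = \<phi> i" by simp
    qed
  qed
  then show ?thesis by simp
qed

lemma per_shift:
  assumes "per_grid n f"
  shows "f (a + int n * p) (b + int n * q) (c + int n * r) = f a b c"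
proof -
  have "f (a + int n * p) (b + int n * q) (c + int n * r) = f a (b + int n * q) (c + int n * r)"
    by (rule per1[where \<phi>="\<lambda>i. f i (b + int n * q) (c + int n * r)"]) (use assms in \<open>simp add: per_grid_def\<close>)
  also have "\<dots> = f a b (c + int n * r)"
    by (rule per1[where \<phi>="\<lambda>i. f a i (c + int n * r)"]) (use assms in \<open>simp add: per_grid_def\<close>)
  also have "\<dots> = f a b c"
    by (rule per1[where \<phi>="\<lambda>i. f a b i"]) (use assms in \<open>simp add: per_grid_def\<close>)
  finally show ?thesis .
qed

definition rr :: "nat \<Rightarrow> int \<Rightarrow> int" where "rr n t = (t - 1) mod int n + 1"

lemma rr_I: assumes "n \<ge> 1" shows "rr n t \<in> {1..int n}"
proof -
  have "0 < int n" using assms by simp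
  then have "(t - 1) mod int n < int n" "0 \<le> (t - 1) mod int n" by simp_all
  then show ?thesis by (simp add: rr_def)
qed

lemma rr_eq: "rr n t = t + int n * (- ((t - 1) div int n))"
proof -
  have "(t - 1) div int n * int n + (t - 1) mod int n = t - 1" by (rule div_mult_mod_eq)
  then show ?thesis unfolding rr_def by (simp add: algebra_simps)
qed

lemma rr_iff: assumes "y \<in> {1..int n}" shows "int n dvd (x - y) \<longleftrightarrow> y = rr n x"
proof -
  have y: "y = (y - 1) mod int n + 1" using assms by simp
  have "int n dvd (x - y) \<longleftrightarrow> int n dvd ((x - 1) - (y - 1))" by simp
  also have "\<dots> \<longleftrightarrow> (x - 1) mod int n = (y - 1) mod int n" by (simp add: mod_eq_dvd_iff)
  also have "\<dots> \<longleftrightarrow> y = rr n x" unfolding rr_def using y by auto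
  finally show ?thesis .
qed

lemma inversion:
  assumes n: "n \<ge> 1" and f: "per_grid n f"
  shows "f x1 x2 x3 = (\<Sum>k\<in>K3 n. co n f k * E n k (x1, x2, x3))"
proof -
  define r where "r = (rr n x1, rr n x2, rr n x3)"
  have rI: "r \<in> I3 n" using rr_I[OF n] by (simp add: r_def)
  have nz: "(of_nat n :: complex) ^ 3 \<noteq> 0" using n by simp
  have "(\<Sum>k\<in>K3 n. co n f k * E n k (x1, x2, x3))
      = (1 / of_nat n ^ 3) * (\<Sum>k\<in>K3 n. \<Sum>y\<in>I3 n. T f y * (cnj (E n k y) * E n k (x1, x2, x3)))"
    unfolding co_def by (simp add: sum_distrib_left sum_distrib_right mult_ac)
  also have "\<dots> = (1 / of_nat n ^ 3) * (\<Sum>y\<in>I3 n. T f y * (\<Sum>k\<in>K3 n. cnj (E n k y) * E n k (x1, x2, x3)))"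
    by (simp add: sum.swap[of _ "K3 n"] sum_distrib_left)
  also have "\<dots> = (1 / of_nat n ^ 3) * (\<Sum>y\<in>I3 n. T f y * (if y = r then of_nat n ^ 3 else 0))"
  proof -
    have "(\<Sum>k\<in>K3 n. cnj (E n k y) * E n k (x1, x2, x3)) = (if y = r then of_nat n ^ 3 else 0)"
      if y: "y \<in> I3 n" for y
      unfolding ortho_k[OF n y] using y rr_iff[of "fst y" n] rr_iff[of "fst (snd y)" n] rr_iff[of "snd (snd y)" n]
      by (auto simp: r_def)
    then show ?thesis by (intro arg_cong[where f="\<lambda>z. _ * z"] sum.cong) auto
  qed
  also have "\<dots> = T f r"
  proof -
    have "(\<Sum>y\<in>I3 n. T f y * (if y = r then of_nat n ^ 3 else 0)) = (\<Sum>y\<in>I3 n. if y = r then T f r * of_nat n ^ 3 else 0)"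
      by (intro sum.cong) auto
    also have "\<dots> = T f r * of_nat n ^ 3" using rI by (subst sum.delta) auto
    finally show ?thesis using nz by simp
  qed
  also have "\<dots> = f x1 x2 x3"
    unfolding r_def rr_eq T_simp by (rule per_shift[OF f])
  finally show ?thesis by simp
qed

lemma grid_inner_T: "grid_inner n f g = complex_of_real (grid_h n ^ 3) * (\<Sum>x\<in>I3 n. cnj (T f x) * T g x)"
  unfolding grid_inner_def sum3_nest by (simp add: T_def case_prod_unfold)

lemma cnj_mult_self: "cnj z * z = complex_of_real ((cmod z)\<^sup>2)"
  by (metis complex_norm_square mult.commute)

lemma parseval:
  assumes n: "n \<ge> 1" and u: "\<And>x1 x2 x3. u x1 x2 x3 = (\<Sum>k\<in>K3 n. c k * E n k (x1, x2, x3))"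
  shows "grid_norm2 n u = sqrt (\<Sum>k\<in>K3 n. (cmod (c k))\<^sup>2)"
proof -
  have Tu: "T u x = (\<Sum>k\<in>K3 n. c k * E n k x)" for x
    by (cases x) (simp add: u)
  have "(\<Sum>x\<in>I3 n. cnj (T u x) * T u x)
      = (\<Sum>x\<in>I3 n. \<Sum>k\<in>K3 n. \<Sum>l\<in>K3 n. cnj (c k) * c l * (cnj (E n k x) * E n l x))"
    unfolding Tu by (simp add: sum_distrib_left sum_distrib_right mult_ac)
  also have "\<dots> = (\<Sum>k\<in>K3 n. \<Sum>l\<in>K3 n. cnj (c k) * c l * (\<Sum>x\<in>I3 n. cnj (E n k x) * E n l x))"
    by (simp add: sum.swap[of _ "I3 n"] sum_distrib_left)
  also have "\<dots> = (\<Sum>k\<in>K3 n. \<Sum>l\<in>K3 n. if l = k then cnj (c k) * c k * of_nat n ^ 3 else 0)"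
    by (intro sum.cong refl) (auto simp: ortho_x[OF n])
  also have "\<dots> = (\<Sum>k\<in>K3 n. cnj (c k) * c k * of_nat n ^ 3)"
    by (intro sum.cong refl) (subst sum.delta, auto)
  also have "\<dots> = of_nat n ^ 3 * complex_of_real (\<Sum>k\<in>K3 n. (cmod (c k))\<^sup>2)"
    unfolding cnj_mult_self of_real_sum sum_distrib_left by (simp add: mult_ac)
  finally have "grid_inner n u u = complex_of_real (\<Sum>k\<in>K3 n. (cmod (c k))\<^sup>2)"
    unfolding grid_inner_T grid_h_def using n by (simp add: power_divide)
  then show ?thesis unfolding grid_norm2_def by simp
qed

definition sn :: "nat \<Rightarrow> int \<Rightarrow> real" where
  "sn n t = (sin (pi * of_int t / real n))\<^sup>2"

fun lam :: "nat \<Rightarrow> int \<times> int \<times> int \<Rightarrow> real" where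
  "lam n (k1, k2, k3) = - (4 * (real n)\<^sup>2 * (sn n k1 + sn n k2 + sn n k3))"

lemma ex_pm: "ex n k 1 + ex n k (-1) = complex_of_real (2 - 4 * sn n k)"
proof -
  have "ex n k 1 + ex n k (-1) = cis (2 * pi * of_int k / real n) + cis (- (2 * pi * of_int k / real n))"
    by (simp add: ex_def)
  also have "\<dots> = complex_of_real (2 * cos (2 * (pi * of_int k / real n)))"
    by (simp add: complex_eq_iff mult.assoc)
  also have "\<dots> = complex_of_real (2 - 4 * sn n k)"
  proof (rule arg_cong[where f=complex_of_real])
    show "2 * cos (2 * (pi * of_int k / real n)) = 2 - 4 * sn n k"
      unfolding sn_def cos_double_sin by simp
  qed
  finally show ?thesis .
qed

lemma E_lap:
  "E n (k1, k2, k3) (x1 + 1, x2, x3) + E n (k1, k2, k3) (x1 - 1, x2, x3) + E n (k1, k2, k3) (x1, x2 + 1, x3)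
   + E n (k1, k2, k3) (x1, x2 - 1, x3) + E n (k1, k2, k3) (x1, x2, x3 + 1) + E n (k1, k2, k3) (x1, x2, x3 - 1)
   - 6 * E n (k1, k2, k3) (x1, x2, x3)
   = E n (k1, k2, k3) (x1, x2, x3) * complex_of_real (- 4 * (sn n k1 + sn n k2 + sn n k3))"
proof -
  have p: "ex n k (x + 1) = ex n k x * ex n k 1" for k x by (simp add: ex_add2)
  have m: "ex n k (x - 1) = ex n k x * (complex_of_real (2 - 4 * sn n k) - ex n k 1)" for k x
  proof -
    have "ex n k (-1) = complex_of_real (2 - 4 * sn n k) - ex n k 1"
      using ex_pm[of n k] by (metis add_diff_cancel_left')
    then show ?thesis using ex_add2[of n k x "-1"] by simp
  qed
  show ?thesis unfolding E.simps p m by (simp add: algebra_simps)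
qed

lemma eigen:
  assumes n: "n \<ge> 1" and u: "\<And>x1 x2 x3. u x1 x2 x3 = (\<Sum>k\<in>K3 n. c k * E n k (x1, x2, x3))"
  shows "lap_h n u x1 x2 x3 = (\<Sum>k\<in>K3 n. (c k * complex_of_real (lam n k)) * E n k (x1, x2, x3))"
proof -
  have h: "1 / grid_h n ^ 2 = (real n)\<^sup>2" by (simp add: grid_h_def power_divide)
  have "lap_h n u x1 x2 x3 = complex_of_real ((real n)\<^sup>2) * (\<Sum>k\<in>K3 n. c k *
     (E n k (x1 + 1, x2, x3) + E n k (x1 - 1, x2, x3) + E n k (x1, x2 + 1, x3)
   + E n k (x1, x2 - 1, x3) + E n k (x1, x2, x3 + 1) + E n k (x1, x2, x3 - 1)
   - 6 * E n k (x1, x2, x3)))"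
    unfolding lap_h_def h u by (simp add: sum.distrib sum_subtractf sum_distrib_left algebra_simps)
  also have "\<dots> = (\<Sum>k\<in>K3 n. (c k * complex_of_real (lam n k)) * E n k (x1, x2, x3))"
    unfolding sum_distrib_left
  proof (intro sum.cong refl)
    fix k :: "int \<times> int \<times> int"
    obtain k1 k2 k3 where kk: "k = (k1, k2, k3)" by (cases k)
    show "complex_of_real ((real n)\<^sup>2) * (c k *
     (E n k (x1 + 1, x2, x3) + E n k (x1 - 1, x2, x3) + E n k (x1, x2 + 1, x3)
   + E n k (x1, x2 - 1, x3) + E n k (x1, x2, x3 + 1) + E n k (x1, x2, x3 - 1)
   - 6 * E n k (x1, x2, x3))) = (c k * complex_of_real (lam n k)) * E n k (x1, x2, x3)"
      unfolding kk E_lap by (simp add: algebra_simps)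
  qed
  finally show ?thesis .
qed

fun sg :: "nat \<Rightarrow> int \<times> int \<times> int \<Rightarrow> int \<times> int \<times> int \<Rightarrow> int \<times> int \<times> int" where
  "sg n (m1, m2, m3) (k1, k2, k3) = ((m1 - k1) mod int n, (m2 - k2) mod int n, (m3 - k3) mod int n)"

lemma modK: "n \<ge> 1 \<Longrightarrow> x mod int n \<in> {0..int n - 1}"
  by (simp add: int_one_le_iff_zero_less pos_mod_bound pos_mod_sign)

lemma K_mod: "t \<in> {0..int n - 1} \<Longrightarrow> t mod int n = t"
  by simp

lemma sg_K: "n \<ge> 1 \<Longrightarrow> sg n m k \<in> K3 n"
  by (cases m; cases k) (simp add: modK)

lemma bij_m: assumes n: "n \<ge> 1" shows "bij_betw (\<lambda>m. sg n m k) (K3 n) (K3 n)"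
proof -
  obtain k1 k2 k3 where kk: "k = (k1, k2, k3)" by (cases k)
  define g where "g = (\<lambda>(l1, l2, l3). ((l1 + k1) mod int n, (l2 + k2) mod int n, (l3 + k3) mod int n))"
  show ?thesis
  proof (rule bij_betw_byWitness[where f'=g])
    show "\<forall>a\<in>K3 n. g (sg n a k) = a"
      by (auto simp: g_def kk mod_add_left_eq)
    show "\<forall>a\<in>K3 n. sg n (g a) k = a"
      by (auto simp: g_def kk mod_diff_left_eq)
    show "(\<lambda>m. sg n m k) ` K3 n \<subseteq> K3 n" using sg_K[OF n] by blast
    show "g ` K3 n \<subseteq> K3 n" using modK[OF n] by (auto simp: g_def)
  qed
qed

lemma sg_inv: "k \<in> K3 n \<Longrightarrow> sg n m (sg n m k) = k"
  by (cases m; cases k) (auto simp: mod_diff_right_eq)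

lemma bij_k: assumes n: "n \<ge> 1" shows "bij_betw (\<lambda>k. sg n m k) (K3 n) (K3 n)"
proof (rule bij_betw_byWitness[where f'="\<lambda>k. sg n m k"])
  show "\<forall>a\<in>K3 n. sg n m (sg n m a) = a" "\<forall>a\<in>K3 n. sg n m (sg n m a) = a" using sg_inv by blast+
  show "(\<lambda>k. sg n m k) ` K3 n \<subseteq> K3 n" "(\<lambda>k. sg n m k) ` K3 n \<subseteq> K3 n" using sg_K[OF n] by blast+
qed

lemma ex_sg1: assumes n: "n \<ge> 1" shows "ex n k x * ex n ((m - k) mod int n) x = ex n m x"
proof -
  have "ex n k x * ex n ((m - k) mod int n) x = ex n (k + (m - k) mod int n) x" by (rule ex_add1)
  also have "\<dots> = ex n ((k + (m - k) mod int n) mod int n) x" by (rule ex_mod[OF n, symmetric])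
  also have "(k + (m - k) mod int n) mod int n = m mod int n" by (simp add: mod_add_right_eq)
  also have "ex n (m mod int n) x = ex n m x" by (rule ex_mod[OF n])
  finally show ?thesis .
qed

lemma E_sg: assumes n: "n \<ge> 1" shows "E n k x * E n (sg n m k) x = E n m x"
proof -
  obtain k1 k2 k3 where kk: "k = (k1, k2, k3)" by (cases k)
  obtain m1 m2 m3 where mm: "m = (m1, m2, m3)" by (cases m)
  obtain x1 x2 x3 where xx: "x = (x1, x2, x3)" by (cases x)
  have r: "A1 * A2 * A3 * (B1 * B2 * B3) = (A1 * B1) * (A2 * B2) * (A3 * (B3::complex))" for A1 A2 A3 B1 B2 B3
    by (simp add: mult_ac)
  show ?thesis unfolding kk mm xx sg.simps E.simps r ex_sg1[OF n] ..
qed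

lemma product:
  assumes n: "n \<ge> 1"
    and f: "\<And>x1 x2 x3. f x1 x2 x3 = (\<Sum>k\<in>K3 n. a k * E n k (x1, x2, x3))"
    and g: "\<And>x1 x2 x3. g x1 x2 x3 = (\<Sum>k\<in>K3 n. b k * E n k (x1, x2, x3))"
  shows "f x1 x2 x3 * g x1 x2 x3 = (\<Sum>m\<in>K3 n. (\<Sum>k\<in>K3 n. a k * b (sg n m k)) * E n m (x1, x2, x3))"
proof -
  let ?x = "(x1, x2, x3)"
  have "f x1 x2 x3 * g x1 x2 x3 = (\<Sum>k\<in>K3 n. \<Sum>l\<in>K3 n. a k * b l * (E n k ?x * E n l ?x))"
    unfolding f g sum_product by (simp add: mult_ac)
  also have "\<dots> = (\<Sum>k\<in>K3 n. \<Sum>m\<in>K3 n. a k * b (sg n m k) * (E n k ?x * E n (sg n m k) ?x))"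
  proof (rule sum.cong[OF refl])
    fix k
    show "(\<Sum>l\<in>K3 n. a k * b l * (E n k ?x * E n l ?x)) = (\<Sum>m\<in>K3 n. a k * b (sg n m k) * (E n k ?x * E n (sg n m k) ?x))"
      using sum.reindex_bij_betw[OF bij_m[OF n, of k], of "\<lambda>l. a k * b l * (E n k ?x * E n l ?x)"]
      by simp
  qed
  also have "\<dots> = (\<Sum>k\<in>K3 n. \<Sum>m\<in>K3 n. a k * b (sg n m k) * E n m ?x)"
    by (simp add: E_sg[OF n])
  also have "\<dots> = (\<Sum>m\<in>K3 n. (\<Sum>k\<in>K3 n. a k * b (sg n m k)) * E n m ?x)"
    by (subst sum.swap) (simp add: sum_distrib_right)
  finally show ?thesis .
qed

lemma sq_sum_le: "((a::real) + b)\<^sup>2 \<le> 2 * a\<^sup>2 + 2 * b\<^sup>2"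
proof -
  have "0 \<le> (a - b)\<^sup>2" by simp
  then show ?thesis unfolding power2_diff power2_sum by linarith
qed

lemma sin_sq_add: fixes x y :: real shows "(sin (x + y))\<^sup>2 \<le> 2 * (sin x)\<^sup>2 + 2 * (sin y)\<^sup>2"
proof -
  have a: "\<bar>sin x * cos y\<bar> \<le> \<bar>sin x\<bar>"
    unfolding abs_mult by (rule mult_right_le_one_le) (auto simp: abs_cos_le_one)
  have b: "\<bar>cos x * sin y\<bar> \<le> \<bar>sin y\<bar>"
    unfolding abs_mult by (rule mult_left_le_one_le) (auto simp: abs_cos_le_one)
  have "\<bar>sin (x + y)\<bar> \<le> \<bar>sin x\<bar> + \<bar>sin y\<bar>"
    unfolding sin_add using a b abs_triangle_ineq[of "sin x * cos y" "cos x * sin y"] by linarith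
  then have "(sin (x + y))\<^sup>2 \<le> (\<bar>sin x\<bar> + \<bar>sin y\<bar>)\<^sup>2"
    by (metis abs_ge_zero power2_abs power_mono)
  also have "\<dots> \<le> 2 * (sin x)\<^sup>2 + 2 * (sin y)\<^sup>2"
    using sq_sum_le[of "\<bar>sin x\<bar>" "\<bar>sin y\<bar>"] by simp
  finally show ?thesis .
qed

lemma sin_sq_per: fixes x :: real shows "(sin (x + pi * of_int q))\<^sup>2 = (sin x)\<^sup>2"
proof -
  have "cos (2 * (x + pi * of_int q)) = cos (2 * x)"
  proof -
    have "2 * (x + pi * of_int q) = 2 * x + (2 * pi) * of_int q" by (simp add: algebra_simps)
    moreover have "cos (2 * x + (2 * pi) * of_int q) = cos (2 * x)"
      by (simp only: cos_add cos_int_2pin sin_int_2pin)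
    ultimately show ?thesis by (simp only:)
  qed
  then show ?thesis unfolding cos_double_sin by simp
qed

lemma sn_nonneg: "0 \<le> sn n t" by (simp add: sn_def)

lemma sn_per: assumes n: "n \<ge> 1" shows "sn n (a + int n * q) = sn n a"
proof -
  have "pi * of_int (a + int n * q) / real n = pi * of_int a / real n + pi * of_int q"
    using n by (simp add: field_simps)
  then show ?thesis unfolding sn_def by (simp add: sin_sq_per)
qed

lemma sn_sub: assumes n: "n \<ge> 1" shows "sn n m \<le> 2 * sn n k + 2 * sn n ((m - k) mod int n)"
proof -
  have "m = (k + (m - k) mod int n) + int n * ((m - k) div int n)"
    using div_mult_mod_eq[of "m - k" "int n"] by (simp add: algebra_simps)
  then have "sn n m = sn n (k + (m - k) mod int n)" using sn_per[OF n] by metis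
  also have "\<dots> \<le> 2 * sn n k + 2 * sn n ((m - k) mod int n)"
    unfolding sn_def using sin_sq_add by (simp add: add_divide_distrib distrib_left)
  finally show ?thesis .
qed




lemma sin_ge_third: fixes x :: real assumes "0 \<le> x" "x \<le> 2" shows "x / 3 \<le> sin x"
proof -
  have "\<bar>sin x - (\<Sum>m<3. sin_coeff m * x ^ m)\<bar> \<le> inverse (fact 3) * \<bar>x\<bar> ^ 3"
    by (rule Maclaurin_sin_bound)
  moreover have "(\<Sum>m<3. sin_coeff m * x ^ m) = x"
    by (simp add: eval_nat_numeral sin_coeff_def)
  ultimately have "x - x ^ 3 / 6 \<le> sin x" using assms by (simp add: eval_nat_numeral abs_if split: if_splits)
  moreover have "x ^ 3 \<le> 4 * x"
  proof -
    have "x * x \<le> 2 * 2" using assms by (intro mult_mono) auto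
    then have "x * (x * x) \<le> x * 4" using assms by (intro mult_left_mono) auto
    then show ?thesis by (simp add: power3_eq_cube mult_ac)
  qed
  ultimately show ?thesis by simp
qed

lemma jordan_sn:
  assumes n: "n \<ge> 1" and m: "0 \<le> m" "2 * m \<le> int n"
  shows "(real_of_int m)\<^sup>2 \<le> (real n)\<^sup>2 * sn n m"
proof -
  define \<theta> where "\<theta> = pi * of_int m / real n"
  have np: "real n > 0" using n by simp
  have th0: "0 \<le> \<theta>" using m np by (simp add: \<theta>_def)
  have "2 * real_of_int m \<le> real n" using m(2) by linarith
  then have "\<theta> \<le> pi / 2" using np by (simp add: \<theta>_def field_simps)
  then have th2: "\<theta> \<le> 2" using pi_less_4 by linarith
  have s: "\<theta> / 3 \<le> sin \<theta>" using sin_ge_third[OF th0 th2] .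
  have "(\<theta> / 3)\<^sup>2 \<le> (sin \<theta>)\<^sup>2" using s th0 by (intro power_mono) auto
  moreover have "(real_of_int m / real n)\<^sup>2 \<le> (\<theta> / 3)\<^sup>2"
  proof (rule power_mono)
    have "3 * (real_of_int m / real n) \<le> pi * (real_of_int m / real n)"
      using pi_gt3 m np by (intro mult_right_mono) auto
    then show "real_of_int m / real n \<le> \<theta> / 3" by (simp add: \<theta>_def)
    show "0 \<le> real_of_int m / real n" using m np by simp
  qed
  ultimately have "(real_of_int m / real n)\<^sup>2 \<le> sn n m" by (simp add: sn_def \<theta>_def)
  then have "(real n)\<^sup>2 * (real_of_int m / real n)\<^sup>2 \<le> (real n)\<^sup>2 * sn n m"
    by (intro mult_left_mono) auto
  then show ?thesis using np by (simp add: power_divide)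
qed

lemma sn_neg: "sn n (- t) = sn n t"
  by (simp add: sn_def)

lemma sn_refl: assumes n: "n \<ge> 1" shows "sn n t = sn n (int n - t)"
proof -
  have "sn n t = sn n (t + int n * (-1))" using sn_per[OF n, of t "-1"] by simp
  also have "\<dots> = sn n (int n - t)" using sn_neg[of n "int n - t"] by simp
  finally show ?thesis .
qed

definition gg :: "nat \<Rightarrow> real" where "gg j = (1 + (real j)\<^sup>2) powr (-2/3)"

lemma gg_nonneg: "0 \<le> gg j" by (simp add: gg_def)

lemma gg_summable: "summable gg"
proof (rule summable_comparison_test'[where N=1])
  show "summable (\<lambda>j. real j powr (-4/3))" by (simp add: summable_real_powr_iff)
  fix j :: nat assume j: "j \<ge> 1"
  have jp: "real j > 0" using j by simp
  have "gg j \<le> ((real j)\<^sup>2) powr (-2/3)"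
    unfolding gg_def using jp by (intro powr_mono2') auto
  also have "((real j)\<^sup>2) powr (-2/3) = real j powr (-4/3)"
  proof -
    have e: "(real j)\<^sup>2 = real j powr 2" using powr_realpow[of "real j" 2] jp by simp
    have "((real j)\<^sup>2) powr (-2/3) = real j powr (2 * (-2/3))" by (simp only: e powr_powr)
    then show ?thesis by simp
  qed
  finally show "norm (gg j) \<le> real j powr (-4/3)" by (simp add: gg_nonneg)
qed

lemma one_dim:
  assumes n: "n \<ge> 1"
  shows "(\<Sum>t\<in>{0..int n - 1}. (1 + 4 * (real n)\<^sup>2 * sn n t) powr (-2/3)) \<le> 2 * suminf gg"
proof -
  have pt: "(1 + 4 * (real n)\<^sup>2 * sn n t) powr (-2/3) \<le> gg (nat t) + gg (nat (int n - t))"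
    if t: "t \<in> {0..int n - 1}" for t
  proof -
    have mono: "(1 + 4 * (real n)\<^sup>2 * sn n t) powr (-2/3) \<le> gg (nat m)"
      if m: "0 \<le> m" "2 * m \<le> int n" and e: "sn n t = sn n m" for m
    proof -
      have "(real_of_int m)\<^sup>2 \<le> (real n)\<^sup>2 * sn n m" by (rule jordan_sn[OF n m])
      moreover have "0 \<le> (real n)\<^sup>2 * sn n m" by (simp add: sn_nonneg)
      ultimately have "1 + (real (nat m))\<^sup>2 \<le> 1 + 4 * (real n)\<^sup>2 * sn n t"
        using m e by simp
      moreover have "0 < 1 + (real (nat m))\<^sup>2" by (metis add_pos_nonneg zero_less_one zero_le_power2)
      ultimately show ?thesis unfolding gg_def by (intro powr_mono2') auto
    qed
    show ?thesis
    proof (cases "2 * t \<le> int n")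
      case True
      then have "(1 + 4 * (real n)\<^sup>2 * sn n t) powr (-2/3) \<le> gg (nat t)" using t by (intro mono) auto
      then show ?thesis using gg_nonneg[of "nat (int n - t)"] by linarith
    next
      case False
      then have "(1 + 4 * (real n)\<^sup>2 * sn n t) powr (-2/3) \<le> gg (nat (int n - t))"
        using t sn_refl[OF n, of t] by (intro mono) auto
      then show ?thesis using gg_nonneg[of "nat t"] by linarith
    qed
  qed
  have "(\<Sum>t\<in>{0..int n - 1}. (1 + 4 * (real n)\<^sup>2 * sn n t) powr (-2/3))
      \<le> (\<Sum>t\<in>{0..int n - 1}. gg (nat t)) + (\<Sum>t\<in>{0..int n - 1}. gg (nat (int n - t)))"
    unfolding sum.distrib[symmetric] by (rule sum_mono) (rule pt)
  also have "(\<Sum>t\<in>{0..int n - 1}. gg (nat t)) = sum gg (nat ` {0..int n - 1})"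
    by (subst sum.reindex) (auto simp: inj_on_def)
  also have "(\<Sum>t\<in>{0..int n - 1}. gg (nat (int n - t))) = sum gg ((\<lambda>t. nat (int n - t)) ` {0..int n - 1})"
    by (subst sum.reindex) (auto simp: inj_on_def)
  also have "sum gg (nat ` {0..int n - 1}) \<le> suminf gg"
    by (rule sum_le_suminf[OF gg_summable]) (auto simp: gg_nonneg)
  also have "sum gg ((\<lambda>t. nat (int n - t)) ` {0..int n - 1}) \<le> suminf gg"
    by (rule sum_le_suminf[OF gg_summable]) (auto simp: gg_nonneg)
  finally show ?thesis by simp
qed

lemma three_bound:
  fixes p q r :: real assumes "0 \<le> p" "0 \<le> q" "0 \<le> r"
  shows "1 / (1 + (p + q + r))\<^sup>2 \<le> (1 + p) powr (-2/3) * (1 + q) powr (-2/3) * (1 + r) powr (-2/3)"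
proof -
  define S where "S = 1 + (p + q + r)"
  have S1: "S \<ge> 1" using assms by (simp add: S_def)
  have "S powr (-2/3) \<le> (1 + p) powr (-2/3)" "S powr (-2/3) \<le> (1 + q) powr (-2/3)" "S powr (-2/3) \<le> (1 + r) powr (-2/3)"
    using assms by (auto intro!: powr_mono2' simp: S_def)
  then have "S powr (-2/3) * S powr (-2/3) * S powr (-2/3) \<le> (1 + p) powr (-2/3) * (1 + q) powr (-2/3) * (1 + r) powr (-2/3)"
    by (intro mult_mono) auto
  moreover have "S powr (-2/3) * S powr (-2/3) * S powr (-2/3) = 1 / S\<^sup>2"
  proof -
    have "S powr (-2/3) * S powr (-2/3) * S powr (-2/3) = S powr (-2/3 + -2/3 + -2/3)"
      by (simp only: powr_add)
    also have "\<dots> = S powr (- 2)" by simp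
    also have "\<dots> = 1 / S\<^sup>2" using S1 by (simp add: powr_minus_divide powr_realpow)
    finally show ?thesis .
  qed
  ultimately show ?thesis by (simp add: S_def)
qed

lemma W_bound: "\<exists>W. W > 0 \<and> (\<forall>n. n \<ge> 1 \<longrightarrow> (\<Sum>k\<in>K3 n. 1 / (1 + \<bar>lam n k\<bar>)\<^sup>2) \<le> W)"
proof (intro exI conjI allI impI)
  define G where "G = 2 * suminf gg"
  have G0: "G \<ge> 0" unfolding G_def using suminf_nonneg[OF gg_summable gg_nonneg] by simp
  show "G ^ 3 + 1 > 0" using G0 by (simp add: add_nonneg_pos)
  fix n :: nat assume n: "n \<ge> 1"
  define h where "h t = (1 + 4 * (real n)\<^sup>2 * sn n t) powr (-2/3)" for t
  have "(\<Sum>k\<in>K3 n. 1 / (1 + \<bar>lam n k\<bar>)\<^sup>2) \<le> (\<Sum>k\<in>K3 n. h (fst k) * h (fst (snd k)) * h (snd (snd k)))"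
  proof (rule sum_mono)
    fix k :: "int \<times> int \<times> int"
    have "\<bar>lam n k\<bar> = 4 * (real n)\<^sup>2 * sn n (fst k) + 4 * (real n)\<^sup>2 * sn n (fst (snd k)) + 4 * (real n)\<^sup>2 * sn n (snd (snd k))"
    proof -
      obtain k1 k2 k3 where kk: "k = (k1, k2, k3)" by (cases k)
      have "0 \<le> 4 * (real n)\<^sup>2 * (sn n k1 + sn n k2 + sn n k3)"
        by (intro mult_nonneg_nonneg add_nonneg_nonneg sn_nonneg) auto
      then have "\<bar>lam n k\<bar> = 4 * (real n)\<^sup>2 * (sn n k1 + sn n k2 + sn n k3)" by (simp add: kk)
      then show ?thesis by (simp add: kk algebra_simps)
    qed
    then show "1 / (1 + \<bar>lam n k\<bar>)\<^sup>2 \<le> h (fst k) * h (fst (snd k)) * h (snd (snd k))"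
      unfolding h_def by (simp only:) (rule three_bound, auto simp: sn_nonneg)
  qed
  also have "\<dots> = sum h {0..int n - 1} * sum h {0..int n - 1} * sum h {0..int n - 1}"
    by (subst sum3_prod[symmetric]) (auto intro!: sum.cong)
  also have "\<dots> \<le> G * G * G"
  proof -
    have b: "sum h {0..int n - 1} \<le> G" unfolding h_def G_def by (rule one_dim[OF n])
    have p: "0 \<le> sum h {0..int n - 1}" unfolding h_def by (auto intro: sum_nonneg)
    show ?thesis using b p G0 by (intro mult_mono) (auto intro: mult_nonneg_nonneg)
  qed
  also have "\<dots> \<le> G ^ 3 + 1" by (simp add: power3_eq_cube)
  finally show "(\<Sum>k\<in>K3 n. 1 / (1 + \<bar>lam n k\<bar>)\<^sup>2) \<le> G ^ 3 + 1" .
qed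



lemma lam_abs: "\<bar>lam n k\<bar> = 4 * (real n)\<^sup>2 * (sn n (fst k) + sn n (fst (snd k)) + sn n (snd (snd k)))"
  by (cases k) (simp add: sn_nonneg)

lemma lam_sub: assumes n: "n \<ge> 1" shows "\<bar>lam n m\<bar> \<le> 2 * \<bar>lam n k\<bar> + 2 * \<bar>lam n (sg n m k)\<bar>"
proof -
  obtain k1 k2 k3 where kk: "k = (k1, k2, k3)" by (cases k)
  obtain m1 m2 m3 where mm: "m = (m1, m2, m3)" by (cases m)
  have "sn n m1 + sn n m2 + sn n m3 \<le> 2 * (sn n k1 + sn n k2 + sn n k3)
     + 2 * (sn n ((m1 - k1) mod int n) + sn n ((m2 - k2) mod int n) + sn n ((m3 - k3) mod int n))"
    using sn_sub[OF n, of m1 k1] sn_sub[OF n, of m2 k2] sn_sub[OF n, of m3 k3] by simp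
  then have "4 * (real n)\<^sup>2 * (sn n m1 + sn n m2 + sn n m3) \<le> 4 * (real n)\<^sup>2 * (2 * (sn n k1 + sn n k2 + sn n k3)
     + 2 * (sn n ((m1 - k1) mod int n) + sn n ((m2 - k2) mod int n) + sn n ((m3 - k3) mod int n)))"
    by (intro mult_left_mono) auto
  then show ?thesis unfolding lam_abs kk mm by (simp add: algebra_simps)
qed

lemma young:
  assumes n: "n \<ge> 1" and X: "\<And>k. X k \<ge> 0" and Y: "\<And>k. Y k \<ge> (0::real)"
  shows "(\<Sum>m\<in>K3 n. (\<Sum>k\<in>K3 n. X k * Y (sg n m k))\<^sup>2) \<le> (\<Sum>k\<in>K3 n. (X k)\<^sup>2) * (\<Sum>k\<in>K3 n. Y k)\<^sup>2"
proof -
  have sY: "(\<Sum>k\<in>K3 n. Y (sg n m k)) = (\<Sum>k\<in>K3 n. Y k)" for m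
    using sum.reindex_bij_betw[OF bij_k[OF n, of m], of Y] .
  have sY2: "(\<Sum>m\<in>K3 n. Y (sg n m k)) = (\<Sum>k\<in>K3 n. Y k)" for k
    using sum.reindex_bij_betw[OF bij_m[OF n, of k], of Y] .
  have cs: "(\<Sum>k\<in>K3 n. X k * Y (sg n m k))\<^sup>2 \<le> (\<Sum>k\<in>K3 n. (X k)\<^sup>2 * Y (sg n m k)) * (\<Sum>k\<in>K3 n. Y k)" for m
  proof -
    have "(\<Sum>k\<in>K3 n. X k * Y (sg n m k)) = (\<Sum>k\<in>K3 n. (X k * sqrt (Y (sg n m k))) * sqrt (Y (sg n m k)))"
      using Y by (intro sum.cong refl) (simp add: mult.assoc)
    then have "(\<Sum>k\<in>K3 n. X k * Y (sg n m k))\<^sup>2 \<le> (\<Sum>k\<in>K3 n. (X k * sqrt (Y (sg n m k)))\<^sup>2) * (\<Sum>k\<in>K3 n. (sqrt (Y (sg n m k)))\<^sup>2)"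
      by (simp only: Cauchy_Schwarz_ineq_sum)
    also have "\<dots> = (\<Sum>k\<in>K3 n. (X k)\<^sup>2 * Y (sg n m k)) * (\<Sum>k\<in>K3 n. Y (sg n m k))"
      using Y by (simp add: power_mult_distrib)
    finally show ?thesis unfolding sY .
  qed
  have "(\<Sum>m\<in>K3 n. (\<Sum>k\<in>K3 n. X k * Y (sg n m k))\<^sup>2) \<le> (\<Sum>m\<in>K3 n. (\<Sum>k\<in>K3 n. (X k)\<^sup>2 * Y (sg n m k)) * (\<Sum>k\<in>K3 n. Y k))"
    by (rule sum_mono) (rule cs)
  also have "\<dots> = (\<Sum>m\<in>K3 n. \<Sum>k\<in>K3 n. (X k)\<^sup>2 * Y (sg n m k)) * (\<Sum>k\<in>K3 n. Y k)"
    by (simp add: sum_distrib_right)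
  also have "\<dots> = (\<Sum>k\<in>K3 n. \<Sum>m\<in>K3 n. (X k)\<^sup>2 * Y (sg n m k)) * (\<Sum>k\<in>K3 n. Y k)"
    by (rule arg_cong[where f="\<lambda>z. z * (\<Sum>k\<in>K3 n. Y k)"], rule sum.swap)
  also have "\<dots> = (\<Sum>k\<in>K3 n. (X k)\<^sup>2 * (\<Sum>m\<in>K3 n. Y (sg n m k))) * (\<Sum>k\<in>K3 n. Y k)"
    by (simp add: sum_distrib_left)
  also have "\<dots> = (\<Sum>k\<in>K3 n. (X k)\<^sup>2) * (\<Sum>k\<in>K3 n. Y k)\<^sup>2"
    unfolding sY2 by (simp add: sum_distrib_right power2_eq_square mult.assoc)
  finally show ?thesis .
qed

lemma l1_bound:
  assumes W: "(\<Sum>k\<in>K3 n. 1 / (1 + \<bar>lam n k\<bar>)\<^sup>2) \<le> W" and al: "\<And>k. \<alpha> k \<ge> (0::real)"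
  shows "(\<Sum>k\<in>K3 n. \<alpha> k) \<le> sqrt (2 * W) * (sqrt (\<Sum>k\<in>K3 n. (\<alpha> k)\<^sup>2) + sqrt (\<Sum>k\<in>K3 n. (\<bar>lam n k\<bar> * \<alpha> k)\<^sup>2))"
proof -
  let ?l = "\<lambda>k. \<bar>lam n k\<bar>"
  have W0: "0 \<le> W" using W order_trans[OF sum_nonneg] by (meson zero_le_divide_1_iff zero_le_power2)
  have "(\<Sum>k\<in>K3 n. \<alpha> k) = (\<Sum>k\<in>K3 n. (1 / (1 + ?l k)) * ((1 + ?l k) * \<alpha> k))"
  proof (rule sum.cong[OF refl])
    fix k have "1 + ?l k > 0" by simp
    then show "\<alpha> k = (1 / (1 + ?l k)) * ((1 + ?l k) * \<alpha> k)" by simp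
  qed
  then have "(\<Sum>k\<in>K3 n. \<alpha> k)\<^sup>2 \<le> (\<Sum>k\<in>K3 n. (1 / (1 + ?l k))\<^sup>2) * (\<Sum>k\<in>K3 n. ((1 + ?l k) * \<alpha> k)\<^sup>2)"
    by (simp only: Cauchy_Schwarz_ineq_sum)
  also have "\<dots> \<le> W * (2 * ((\<Sum>k\<in>K3 n. (\<alpha> k)\<^sup>2) + (\<Sum>k\<in>K3 n. (?l k * \<alpha> k)\<^sup>2)))"
  proof (rule mult_mono)
    show "(\<Sum>k\<in>K3 n. (1 / (1 + ?l k))\<^sup>2) \<le> W" using W by (simp add: power_one_over)
    have "((1 + ?l k) * \<alpha> k)\<^sup>2 \<le> 2 * (\<alpha> k)\<^sup>2 + 2 * (?l k * \<alpha> k)\<^sup>2" for k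
      using sq_sum_le[of "\<alpha> k" "?l k * \<alpha> k"] by (simp add: algebra_simps)
    then show "(\<Sum>k\<in>K3 n. ((1 + ?l k) * \<alpha> k)\<^sup>2) \<le> 2 * ((\<Sum>k\<in>K3 n. (\<alpha> k)\<^sup>2) + (\<Sum>k\<in>K3 n. (?l k * \<alpha> k)\<^sup>2))"
      by (simp add: sum_distrib_left sum.distrib[symmetric] sum_mono)
    show "0 \<le> W" using W order_trans[OF sum_nonneg] by (meson zero_le_divide_1_iff zero_le_power2)
    show "0 \<le> (\<Sum>k\<in>K3 n. ((1 + ?l k) * \<alpha> k)\<^sup>2)"
      by (simp add: sum_nonneg)
  qed
  finally have *: "(\<Sum>k\<in>K3 n. \<alpha> k)\<^sup>2 \<le> (2 * W) * ((\<Sum>k\<in>K3 n. (\<alpha> k)\<^sup>2) + (\<Sum>k\<in>K3 n. (?l k * \<alpha> k)\<^sup>2))"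
    by (simp add: algebra_simps)
  have "(\<Sum>k\<in>K3 n. \<alpha> k) \<le> sqrt ((2 * W) * ((\<Sum>k\<in>K3 n. (\<alpha> k)\<^sup>2) + (\<Sum>k\<in>K3 n. (?l k * \<alpha> k)\<^sup>2)))"
    using real_le_rsqrt[OF *] .
  also have "\<dots> = sqrt (2 * W) * sqrt ((\<Sum>k\<in>K3 n. (\<alpha> k)\<^sup>2) + (\<Sum>k\<in>K3 n. (?l k * \<alpha> k)\<^sup>2))"
    using W0 by (simp add: real_sqrt_mult)
  also have "\<dots> \<le> sqrt (2 * W) * (sqrt (\<Sum>k\<in>K3 n. (\<alpha> k)\<^sup>2) + sqrt (\<Sum>k\<in>K3 n. (?l k * \<alpha> k)\<^sup>2))"
    using W0 by (intro mult_left_mono sqrt_add_le_add_sqrt) (auto simp: sum_nonneg)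
  finally show ?thesis .
qed

lemma sqrt_sq_sum_le: assumes "0 \<le> p" "0 \<le> q" shows "sqrt (8 * p\<^sup>2 + 8 * q\<^sup>2) \<le> sqrt 8 * (p + q)"
proof -
  have "sqrt (8 * p\<^sup>2 + 8 * q\<^sup>2) = sqrt 8 * sqrt (p\<^sup>2 + q\<^sup>2)" by (simp add: real_sqrt_mult[symmetric] algebra_simps)
  also have "sqrt (p\<^sup>2 + q\<^sup>2) \<le> p + q"
    using assms by (intro real_le_lsqrt) (auto simp: power2_sum)
  finally show ?thesis by simp
qed

lemma core:
  assumes n: "n \<ge> 1" and W: "(\<Sum>k\<in>K3 n. 1 / (1 + \<bar>lam n k\<bar>)\<^sup>2) \<le> W"
  shows "sqrt (\<Sum>m\<in>K3 n. (cmod ((\<Sum>k\<in>K3 n. a k * b (sg n m k)) * complex_of_real (lam n m)))\<^sup>2)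
    \<le> 8 * sqrt W * (sqrt (\<Sum>k\<in>K3 n. (cmod (a k))\<^sup>2) + sqrt (\<Sum>k\<in>K3 n. (cmod (a k * complex_of_real (lam n k)))\<^sup>2))
                 * (sqrt (\<Sum>k\<in>K3 n. (cmod (b k))\<^sup>2) + sqrt (\<Sum>k\<in>K3 n. (cmod (b k * complex_of_real (lam n k)))\<^sup>2))"
proof -
  define \<alpha> where "\<alpha> k = cmod (a k)" for k
  define \<beta> where "\<beta> k = cmod (b k)" for k
  define ell where "ell k = \<bar>lam n k\<bar>" for k
  have W0: "0 \<le> W" using W order_trans[OF sum_nonneg] by (meson zero_le_divide_1_iff zero_le_power2)
  have al: "\<alpha> k \<ge> 0" "\<beta> k \<ge> 0" "ell k \<ge> 0" for k by (auto simp: \<alpha>_def \<beta>_def ell_def)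
  have cma: "cmod (a k * complex_of_real (lam n k)) = ell k * \<alpha> k" for k
    by (simp add: \<alpha>_def ell_def norm_mult)
  have cmb: "cmod (b k * complex_of_real (lam n k)) = ell k * \<beta> k" for k
    by (simp add: \<beta>_def ell_def norm_mult)
  define P where "P m = (\<Sum>k\<in>K3 n. (ell k * \<alpha> k) * \<beta> (sg n m k))" for m
  define Q where "Q m = (\<Sum>k\<in>K3 n. (ell k * \<beta> k) * \<alpha> (sg n m k))" for m
  have P0: "P m \<ge> 0" and Q0: "Q m \<ge> 0" for m
    unfolding P_def Q_def by (auto intro!: sum_nonneg mult_nonneg_nonneg al)
  have pt: "cmod ((\<Sum>k\<in>K3 n. a k * b (sg n m k)) * complex_of_real (lam n m)) \<le> 2 * P m + 2 * Q m" for m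
  proof -
    have "cmod ((\<Sum>k\<in>K3 n. a k * b (sg n m k)) * complex_of_real (lam n m))
        = cmod (\<Sum>k\<in>K3 n. a k * b (sg n m k)) * ell m"
      by (simp add: norm_mult ell_def)
    also have "\<dots> \<le> (\<Sum>k\<in>K3 n. \<alpha> k * \<beta> (sg n m k)) * ell m"
      using al by (intro mult_right_mono) (auto intro: order_trans[OF norm_sum] simp: norm_mult \<alpha>_def \<beta>_def)
    also have "\<dots> = (\<Sum>k\<in>K3 n. \<alpha> k * \<beta> (sg n m k) * ell m)"
      by (simp add: sum_distrib_right)
    also have "\<dots> \<le> (\<Sum>k\<in>K3 n. \<alpha> k * \<beta> (sg n m k) * (2 * ell k + 2 * ell (sg n m k)))"
      using al lam_sub[OF n, of m] by (intro sum_mono mult_left_mono) (auto simp: ell_def)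
    also have "\<dots> = 2 * P m + 2 * (\<Sum>k\<in>K3 n. \<alpha> k * (ell (sg n m k) * \<beta> (sg n m k)))"
      unfolding P_def by (simp add: algebra_simps sum.distrib sum_distrib_left)
    also have "(\<Sum>k\<in>K3 n. \<alpha> k * (ell (sg n m k) * \<beta> (sg n m k))) = Q m"
    proof -
      have "(\<Sum>k\<in>K3 n. \<alpha> k * (ell (sg n m k) * \<beta> (sg n m k)))
          = (\<Sum>k\<in>K3 n. (\<lambda>j. \<alpha> (sg n m j) * (ell j * \<beta> j)) (sg n m k))"
        by (intro sum.cong refl) (simp add: sg_inv)
      also have "\<dots> = (\<Sum>j\<in>K3 n. \<alpha> (sg n m j) * (ell j * \<beta> j))"
        by (rule sum.reindex_bij_betw[OF bij_k[OF n]])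
      finally show ?thesis unfolding Q_def by (simp add: mult_ac)
    qed
    finally show ?thesis .
  qed
  have "(\<Sum>m\<in>K3 n. (cmod ((\<Sum>k\<in>K3 n. a k * b (sg n m k)) * complex_of_real (lam n m)))\<^sup>2)
      \<le> (\<Sum>m\<in>K3 n. 8 * (P m)\<^sup>2 + 8 * (Q m)\<^sup>2)"
  proof (rule sum_mono)
    fix m
    have "(cmod ((\<Sum>k\<in>K3 n. a k * b (sg n m k)) * complex_of_real (lam n m)))\<^sup>2 \<le> (2 * P m + 2 * Q m)\<^sup>2"
      by (rule power_mono[OF pt]) simp
    also have "\<dots> \<le> 8 * (P m)\<^sup>2 + 8 * (Q m)\<^sup>2"
      using sq_sum_le[of "2 * P m" "2 * Q m"] by (simp add: power_mult_distrib)
    finally show "(cmod ((\<Sum>k\<in>K3 n. a k * b (sg n m k)) * complex_of_real (lam n m)))\<^sup>2 \<le> 8 * (P m)\<^sup>2 + 8 * (Q m)\<^sup>2" .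
  qed
  also have "\<dots> = 8 * (\<Sum>m\<in>K3 n. (P m)\<^sup>2) + 8 * (\<Sum>m\<in>K3 n. (Q m)\<^sup>2)"
    by (simp add: sum.distrib sum_distrib_left)
  also have "\<dots> \<le> 8 * ((\<Sum>k\<in>K3 n. (ell k * \<alpha> k)\<^sup>2) * (\<Sum>k\<in>K3 n. \<beta> k)\<^sup>2)
                 + 8 * ((\<Sum>k\<in>K3 n. (ell k * \<beta> k)\<^sup>2) * (\<Sum>k\<in>K3 n. \<alpha> k)\<^sup>2)"
    unfolding P_def Q_def using al
    by (intro add_mono mult_left_mono young[OF n]) (auto intro: mult_nonneg_nonneg)
  finally have S: "(\<Sum>m\<in>K3 n. (cmod ((\<Sum>k\<in>K3 n. a k * b (sg n m k)) * complex_of_real (lam n m)))\<^sup>2)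
      \<le> 8 * (sqrt (\<Sum>k\<in>K3 n. (ell k * \<alpha> k)\<^sup>2) * (\<Sum>k\<in>K3 n. \<beta> k))\<^sup>2
                 + 8 * (sqrt (\<Sum>k\<in>K3 n. (ell k * \<beta> k)\<^sup>2) * (\<Sum>k\<in>K3 n. \<alpha> k))\<^sup>2"
    by (simp add: power_mult_distrib sum_nonneg)
  define x where "x = sqrt (\<Sum>k\<in>K3 n. (\<alpha> k)\<^sup>2)"
  define y where "y = sqrt (\<Sum>k\<in>K3 n. (ell k * \<alpha> k)\<^sup>2)"
  define u where "u = sqrt (\<Sum>k\<in>K3 n. (\<beta> k)\<^sup>2)"
  define v where "v = sqrt (\<Sum>k\<in>K3 n. (ell k * \<beta> k)\<^sup>2)"
  have xyuv: "x \<ge> 0" "y \<ge> 0" "u \<ge> 0" "v \<ge> 0" by (auto simp: x_def y_def u_def v_def sum_nonneg)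
  have A1: "(\<Sum>k\<in>K3 n. \<alpha> k) \<le> sqrt (2 * W) * (x + y)"
    using l1_bound[OF W, of \<alpha>] al unfolding x_def y_def ell_def by auto
  have B1: "(\<Sum>k\<in>K3 n. \<beta> k) \<le> sqrt (2 * W) * (u + v)"
    using l1_bound[OF W, of \<beta>] al unfolding u_def v_def ell_def by auto
  have A0: "(\<Sum>k\<in>K3 n. \<alpha> k) \<ge> 0" "(\<Sum>k\<in>K3 n. \<beta> k) \<ge> 0" using al by (auto intro: sum_nonneg)
  have "sqrt (\<Sum>m\<in>K3 n. (cmod ((\<Sum>k\<in>K3 n. a k * b (sg n m k)) * complex_of_real (lam n m)))\<^sup>2)
      \<le> sqrt (8 * (y * (\<Sum>k\<in>K3 n. \<beta> k))\<^sup>2 + 8 * (v * (\<Sum>k\<in>K3 n. \<alpha> k))\<^sup>2)"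
    using S unfolding y_def v_def by (rule real_sqrt_le_mono)
  also have "\<dots> \<le> sqrt 8 * (y * (\<Sum>k\<in>K3 n. \<beta> k) + v * (\<Sum>k\<in>K3 n. \<alpha> k))"
    using xyuv A0 by (intro sqrt_sq_sum_le) auto
  also have "\<dots> \<le> sqrt 8 * (y * (sqrt (2 * W) * (u + v)) + v * (sqrt (2 * W) * (x + y)))"
    using xyuv A1 B1 by (intro mult_left_mono add_mono) auto
  also have "\<dots> = (sqrt 8 * sqrt (2 * W)) * (y * (u + v) + v * (x + y))"
    by (simp add: algebra_simps)
  also have "sqrt 8 * sqrt (2 * W) = 4 * sqrt W"
  proof -
    have "sqrt 8 * sqrt (2 * W) = sqrt (4\<^sup>2 * W)" by (simp add: real_sqrt_mult[symmetric])
    also have "\<dots> = sqrt (4\<^sup>2) * sqrt W" by (rule real_sqrt_mult)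
    also have "sqrt (4\<^sup>2) = (4::real)" using real_sqrt_abs[of "4::real"] by simp
    finally show ?thesis .
  qed
  also have "4 * sqrt W * (y * (u + v) + v * (x + y)) \<le> 4 * sqrt W * (2 * ((x + y) * (u + v)))"
  proof (rule mult_left_mono)
    have "0 \<le> x * u" "0 \<le> x * v" "0 \<le> y * u" using xyuv by auto
    then show "y * (u + v) + v * (x + y) \<le> 2 * ((x + y) * (u + v))"
      by (simp add: algebra_simps)
  qed (simp add: W0)
  also have "\<dots> = 8 * sqrt W * (x + y) * (u + v)" by simp
  finally show ?thesis unfolding x_def y_def u_def v_def cma cmb \<alpha>_def \<beta>_def .
qed

theorem proposition4p2:
  shows "\<exists>C::real. C > 0 \<and> (\<forall>N::nat. N \<ge> 1 \<longrightarrow> (\<forall>f g. per_grid N f \<longrightarrow> per_grid N g \<longrightarrow>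
     grid_norm2 N (lap_h N (\<lambda>i j k. f i j k * g i j k))
       \<le> C * (grid_norm2 N f + grid_norm2 N (lap_h N f)) * (grid_norm2 N g + grid_norm2 N (lap_h N g))))"
proof -
  obtain W where W0: "W > 0" and W: "\<And>n. n \<ge> 1 \<Longrightarrow> (\<Sum>k\<in>K3 n. 1 / (1 + \<bar>lam n k\<bar>)\<^sup>2) \<le> W"
    using W_bound by blast
  have "8 * sqrt W > 0" using W0 by simp
  moreover have "grid_norm2 N (lap_h N (\<lambda>i j k. f i j k * g i j k))
       \<le> (8 * sqrt W) * (grid_norm2 N f + grid_norm2 N (lap_h N f)) * (grid_norm2 N g + grid_norm2 N (lap_h N g))"
    if N: "N \<ge> 1" and f: "per_grid N f" and g: "per_grid N g" for N f g
  proof -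
    define a where "a = co N f"
    define b where "b = co N g"
    have hf: "\<And>x1 x2 x3. f x1 x2 x3 = (\<Sum>k\<in>K3 N. a k * E N k (x1, x2, x3))"
      unfolding a_def by (rule inversion[OF N f])
    have hg: "\<And>x1 x2 x3. g x1 x2 x3 = (\<Sum>k\<in>K3 N. b k * E N k (x1, x2, x3))"
      unfolding b_def by (rule inversion[OF N g])
    have lf: "\<And>x1 x2 x3. lap_h N f x1 x2 x3 = (\<Sum>k\<in>K3 N. (a k * complex_of_real (lam N k)) * E N k (x1, x2, x3))"
      by (rule eigen[OF N hf])
    have lg: "\<And>x1 x2 x3. lap_h N g x1 x2 x3 = (\<Sum>k\<in>K3 N. (b k * complex_of_real (lam N k)) * E N k (x1, x2, x3))"
      by (rule eigen[OF N hg])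
    have hfg: "\<And>x1 x2 x3. (\<lambda>i j k. f i j k * g i j k) x1 x2 x3
        = (\<Sum>m\<in>K3 N. (\<Sum>k\<in>K3 N. a k * b (sg N m k)) * E N m (x1, x2, x3))"
      using product[OF N hf hg] by simp
    have lfg: "\<And>x1 x2 x3. lap_h N (\<lambda>i j k. f i j k * g i j k) x1 x2 x3
        = (\<Sum>m\<in>K3 N. ((\<Sum>k\<in>K3 N. a k * b (sg N m k)) * complex_of_real (lam N m)) * E N m (x1, x2, x3))"
      by (rule eigen[OF N hfg])
    show ?thesis
      unfolding parseval[OF N hf] parseval[OF N hg] parseval[OF N lf] parseval[OF N lg] parseval[OF N lfg]
      by (rule core[OF N W[OF N]])
  qed
  ultimately show ?thesis by blast
qed

end
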